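(* Let $(k_n)_{n\geq1}$ be scalars and let $\kappa$ be the infinitesimal character of the gap-insertion Hopf algebra $\mathbf{H}$ of noncrossing partitions with $\kappa(I_n)=k_n$ for $n\geq1$ ($I_n=\{[n]\}$) and $\kappa(P)=0$ for every other noncrossing partition. Let $\mathcal{E}_\prec(\kappa)$ be the unique $\phi\in\mathbf{H}^*$ with $\phi=\varepsilon+\kappa\prec\phi$. Then for every nonempty noncrossing partition $P$, $\mathcal{E}_\prec(\kappa)(P)=\prod_{\pi\in P}k_{\sharp\pi}$, and for every $n\geq1$ $$(\mathcal{E}_\prec(\kappa)\curvearrowleft\zeta)(J_n)=\sum_{Q\in\operatorname{NCP}(n)}\prod_{\pi\in Q}k_{\sharp\pi},$$ where $J_n=\{\{1\},\dots,\{n\}\}$ and $\zeta$ is the character of $\mathbf{B}$ with $\zeta(P)=1$ for every nonempty noncrossing partition $P$.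
   Context: $\operatorname{NCP}(n)$ is the set of noncrossing partitions of $[n]$ (no $a<c<b<d$ with $a,b$ in one block and $c,d$ in another); partitions of finite linearly ordered sets are identified with partitions of $[n]$ via the order-preserving bijection; $P_{|X}$ is the induced partition; $\sharp\pi$ is the cardinality of a block. $\operatorname{Conv}(X)=\{\min X,\dots,\max X\}$; on blocks $\pi\to\rho$ iff $\operatorname{Conv}(\pi)\cap\rho\neq\emptyset$ (transitively closed). Upperset $U$: ($\pi\in U,\pi\to\rho$)$\Rightarrow\rho\in U$; lowerset $L$: ($\pi\in L,\sigma\to\pi$)$\Rightarrow\sigma\in L$. A cut $(L,U)$ splits the blocks into a lowerset $L$ and complement $U$; $L$ is identified with the restriction of $P$ to the union of its blocks, elements $x_1<\dots<x_k$; $D_0=\{y<x_1\}$, $D_i=\{x_i<y<x_{i+1}\}$, $D_k=\{y>x_k\}$, $U_i=P_{|D_i}$, $\overline U$ = ordered product of nonempty $U_i$. $\mathbf H$: free associative unital algebra on nonempty noncrossing partitions, basis of multipartitions $P_1\cdots P_r$ (viewed as partitions of $[n_1+\dots+n_r]$ by shifting); cuts of multipartitions are tuples of cuts, $L=L_1\cdots L_r$, $\overline U=\overline{U_1}\cdots\overline{U_r}$. Counit $\varepsilon$ ($1$ on $\mathbf 1$, $0$ on nonempty monomials). $\Delta_\prec(P)=\sum_{\text{cuts},1\in L}L\otimes\overline U$ for nonempty $P$; $(f\prec g)(\mathbf1)=0$, $(f\prec g)(x)=(f\otimes g)\Delta_\prec(x)$ on nonempty multipartitions. Infinitesimal character: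 linear form vanishing on $\mathbf1$ and on products of two nonempty monomials. $\mathbf B$: free commutative unital algebra on nonempty noncrossing partitions; characters are unital algebra maps to $\mathbb K$. For noncrossing $P\leq Q$ (refinement), $Q=\{\tau_1,\dots,\tau_l\}$, $P/Q=P_{|\tau_1}\cdots P_{|\tau_l}$. Coaction $\rho:\mathbf H\to\mathbf H\otimes\mathbf B$: algebra morphism, $\rho(P)=\sum_{Q\geq P\text{ noncrossing}}Q\otimes P/Q$; $\alpha\curvearrowleft\phi=(\alpha\otimes\phi)\circ\rho$. *)

theory Defs
  imports Main
begin

type_synonym ncpart = "nat set set"

definition is_partition_of :: "nat set \<Rightarrow> ncpart \<Rightarrow> bool" where
  "is_partition_of S P \<longleftrightarrow> (\<forall>\<pi>\<in>P. \<pi> \<noteq> {}) \<and>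
     (\<forall>\<pi>\<in>P. \<forall>\<rho>\<in>P. \<pi> \<noteq> \<rho> \<longrightarrow> \<pi> \<inter> \<rho> = {}) \<and> \<Union>P = S"

definition noncrossing :: "ncpart \<Rightarrow> bool" where
  "noncrossing P \<longleftrightarrow> \<not> (\<exists>\<pi>\<in>P. \<exists>\<rho>\<in>P. \<pi> \<noteq> \<rho> \<and>
     (\<exists>a b c d. a < c \<and> c < b \<and> b < d \<and> a \<in> \<pi> \<and> b \<in> \<pi> \<and> c \<in> \<rho> \<and> d \<in> \<rho>))"

definition NCP :: "nat \<Rightarrow> ncpart set" where
  "NCP n = {P. is_partition_of {1..n} P \<and> noncrossing P}"

text \<open>nonempty noncrossing partitions (generators of H and B)\<close>
definition nonempty_ncp :: "ncpart \<Rightarrow> bool" where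
  "nonempty_ncp P \<longleftrightarrow> (\<exists>n\<ge>1. P \<in> NCP n)"

definition I_part :: "nat \<Rightarrow> ncpart" where "I_part n = {{1..n}}"
definition J_part :: "nat \<Rightarrow> ncpart" where "J_part n = (\<lambda>i. {i}) ` {1..n}"

definition refines :: "ncpart \<Rightarrow> ncpart \<Rightarrow> bool" where
  "refines P Q \<longleftrightarrow> (\<forall>\<pi>\<in>P. \<exists>\<tau>\<in>Q. \<pi> \<subseteq> \<tau>)"

text \<open>Identification of a partition of a finite set of naturals with a partition
  of [m] via the order-preserving bijection.\<close>
definition rank :: "nat set \<Rightarrow> nat \<Rightarrow> nat" where
  "rank S x = card {y\<in>S. y < x} + 1"

definition standardize :: "ncpart \<Rightarrow> ncpart" where
  "standardize P = (\<lambda>\<pi>. rank (\<Union>P) ` \<pi>) ` P"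

definition restrict_part :: "ncpart \<Rightarrow> nat set \<Rightarrow> ncpart" where
  "restrict_part P X = {\<pi> \<inter> X | \<pi>. \<pi> \<in> P \<and> \<pi> \<inter> X \<noteq> {}}"

text \<open>A multipartition P_1 ... P_r is a list of nonempty noncrossing partitions;
  the empty list is the unit 1.\<close>
definition multipartition :: "ncpart list \<Rightarrow> bool" where
  "multipartition xs \<longleftrightarrow> (\<forall>P\<in>set xs. nonempty_ncp P)"

text \<open>Linear forms on H are given by their values on the basis of multipartitions.\<close>
definition counit :: "ncpart list \<Rightarrow> 'a::comm_ring_1" where
  "counit xs = (if xs = [] then 1 else 0)"

definition infinitesimal_char :: "(ncpart list \<Rightarrow> 'a::comm_ring_1) \<Rightarrow> bool" where
  "infinitesimal_char f \<longleftrightarrow> f [] = 0 \<and>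
     (\<forall>xs ys. multipartition xs \<and> multipartition ys \<and> xs \<noteq> [] \<and> ys \<noteq> []
        \<longrightarrow> f (xs @ ys) = 0)"

definition Conv :: "nat set \<Rightarrow> nat set" where
  "Conv X = {Min X..Max X}"

definition arrow :: "ncpart \<Rightarrow> (nat set \<times> nat set) set" where
  "arrow P = {(\<pi>, \<rho>). \<pi> \<in> P \<and> \<rho> \<in> P \<and> Conv \<pi> \<inter> \<rho> \<noteq> {}}\<^sup>+"

definition lowerset :: "ncpart \<Rightarrow> nat set set \<Rightarrow> bool" where
  "lowerset P L \<longleftrightarrow> L \<subseteq> P \<and> (\<forall>\<pi>\<in>L. \<forall>\<sigma>. (\<sigma>, \<pi>) \<in> arrow P \<longrightarrow> \<sigma> \<in> L)"

text \<open>A cut (L,U) is determined by its lowerset L (U = P - L).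
  L as a partition: restriction of P to the union of its blocks (= L), standardized.\<close>
definition cut_L :: "ncpart \<Rightarrow> nat set set \<Rightarrow> ncpart" where
  "cut_L P L = standardize (restrict_part P (\<Union>L))"

text \<open>Gaps D_0,...,D_k of the elements x_1 < ... < x_k of L (0-indexed list)\<close>
definition gap :: "ncpart \<Rightarrow> nat set set \<Rightarrow> nat \<Rightarrow> nat set" where
  "gap P L i = (let xs = sorted_list_of_set (\<Union>L); k = length xs in
     {y \<in> \<Union>P. (i = 0 \<or> xs ! (i - 1) < y) \<and> (i = k \<or> y < xs ! i)})"

text \<open>\<overline>U = ordered product of the nonempty U_i = P_{|D_i}\<close>
definition cut_Ubar :: "ncpart \<Rightarrow> nat set set \<Rightarrow> ncpart list" where
  "cut_Ubar P L = map (\<lambda>i. standardize (restrict_part P (gap P L i)))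
      (filter (\<lambda>i. gap P L i \<noteq> {}) [0..<card (\<Union>L) + 1])"

text \<open>Cuts of a multipartition are tuples of cuts; L = L_1 ... L_r (empty factors
  are the unit), \<overline>U = \<overline>U_1 ... \<overline>U_r.\<close>
definition multi_L :: "ncpart list \<Rightarrow> nat set set list \<Rightarrow> ncpart list" where
  "multi_L xs Ls = filter (\<lambda>P. P \<noteq> {}) (map2 cut_L xs Ls)"

definition multi_Ubar :: "ncpart list \<Rightarrow> nat set set list \<Rightarrow> ncpart list" where
  "multi_Ubar xs Ls = concat (map2 cut_Ubar xs Ls)"

definition multi_cuts :: "ncpart list \<Rightarrow> nat set set list set" where
  "multi_cuts xs = {Ls. length Ls = length xs \<and> (\<forall>i<length xs. lowerset (xs ! i) (Ls ! i))}"

text \<open>half-shuffle product: (f \<prec> g)(1) = 0, (f \<prec> g)(x) = (f \<otimes> g) \<Delta>_\<prec>(x),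
  \<Delta>_\<prec>(x) = sum over cuts with 1 \<in> L of L \<otimes> \<overline>U; the element 1 of the
  concatenated multipartition lies in the first factor.\<close>
definition prec :: "(ncpart list \<Rightarrow> 'a::comm_ring_1) \<Rightarrow> (ncpart list \<Rightarrow> 'a) \<Rightarrow> ncpart list \<Rightarrow> 'a" where
  "prec f g xs = (if xs = [] then 0 else
     (\<Sum>Ls \<in> {Ls \<in> multi_cuts xs. 1 \<in> \<Union>(Ls ! 0)}.
        f (multi_L xs Ls) * g (multi_Ubar xs Ls)))"

text \<open>A character of B is determined by its values psi on the generators
  (nonempty noncrossing partitions): its value on P/Q = P_{|\<tau>1} ... P_{|\<tau>l} is
  the product of psi(P_{|\<tau>j}).  (\<alpha> \<curvearrowleft> \<phi>) = (\<alpha> \<otimes> \<phi>) \<circ> \<rho>, \<rho> multiplicative.\<close>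
definition quot_char :: "(ncpart \<Rightarrow> 'a::comm_ring_1) \<Rightarrow> ncpart \<Rightarrow> ncpart \<Rightarrow> 'a" where
  "quot_char psi P Q = (\<Prod>\<tau>\<in>Q. psi (standardize (restrict_part P \<tau>)))"

definition coact :: "(ncpart list \<Rightarrow> 'a::comm_ring_1) \<Rightarrow> (ncpart \<Rightarrow> 'a) \<Rightarrow> ncpart list \<Rightarrow> 'a" where
  "coact \<alpha> psi xs = (\<Sum>Qs \<in> {Qs. length Qs = length xs \<and>
        (\<forall>i<length xs. Qs ! i \<in> NCP (card (\<Union>(xs ! i))) \<and> refines (xs ! i) (Qs ! i))}.
      \<alpha> Qs * (\<Prod>i<length xs. quot_char psi (xs ! i) (Qs ! i)))"

definition zeta :: "ncpart \<Rightarrow> 'a::comm_ring_1" where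
  "zeta P = 1"

end

theory Submission
  imports Defs
begin

lemma rank_mono:
  assumes "finite S" "x \<in> S" "x < y"
  shows "rank S x < rank S y"
proof -
  have "{z\<in>S. z < x} \<subset> {z\<in>S. z < y}" using assms by auto
  then have "card {z\<in>S. z < x} < card {z\<in>S. z < y}"
    by (rule psubset_card_mono[rotated]) (use assms in auto)
  then show ?thesis by (simp add: rank_def)
qed

lemma rank_image:
  assumes "finite S"
  shows "rank S ` S = {1..card S}"
proof -
  have inj: "inj_on (rank S) S"
    by (rule inj_onI, metis assms rank_mono linorder_neqE_nat less_irrefl)
  have sub: "rank S ` S \<subseteq> {1..card S}"
  proof
    fix r assume "r \<in> rank S ` S"
    then obtain x where x: "x \<in> S" "r = rank S x" by auto
    have "{z\<in>S. z < x} \<subset> S" using x by auto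
    then have "card {z\<in>S. z < x} < card S" using assms by (simp add: psubset_card_mono)
    then show "r \<in> {1..card S}" using x by (simp add: rank_def)
  qed
  moreover have "card (rank S ` S) = card {1..card S}"
    using inj by (simp add: card_image)
  ultimately show ?thesis by (simp add: card_subset_eq)
qed

lemma rank_less_iff:
  assumes "finite S" "x \<in> S" "y \<in> S"
  shows "rank S x < rank S y \<longleftrightarrow> x < y"
  by (metis assms rank_mono linorder_neqE_nat less_asym less_irrefl)

lemma std_NCP:
  assumes fin: "finite S" and part: "is_partition_of S Q" and nc: "noncrossing Q"
  shows "standardize Q \<in> NCP (card S)"
    and "card (standardize Q) = card Q"
    and "(\<Prod>\<beta>\<in>standardize Q. g (card \<beta>)) = (\<Prod>\<pi>\<in>Q. g (card \<pi>))"
proof -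
  have U: "\<Union>Q = S" using part by (simp add: is_partition_of_def)
  define f where "f = rank S"
  have sd: "standardize Q = (\<lambda>\<pi>. f ` \<pi>) ` Q" by (simp add: standardize_def U f_def)
  have inj: "inj_on f S" unfolding f_def
    by (rule inj_onI, metis fin rank_mono linorder_neqE_nat less_irrefl)
  have sub: "\<And>\<pi>. \<pi> \<in> Q \<Longrightarrow> \<pi> \<subseteq> S" using U by auto
  have ne: "\<And>\<pi>. \<pi> \<in> Q \<Longrightarrow> \<pi> \<noteq> {}" using part by (simp add: is_partition_of_def)
  have dj: "\<And>\<pi> \<rho>. \<pi> \<in> Q \<Longrightarrow> \<rho> \<in> Q \<Longrightarrow> \<pi> \<noteq> \<rho> \<Longrightarrow> \<pi> \<inter> \<rho> = {}"
    using part by (simp add: is_partition_of_def)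
  have injQ: "inj_on (\<lambda>\<pi>. f ` \<pi>) Q"
  proof (rule inj_onI)
    fix \<pi> \<rho> assume "\<pi> \<in> Q" "\<rho> \<in> Q" "f ` \<pi> = f ` \<rho>"
    then show "\<pi> = \<rho>" using inj sub by (meson inj_on_image_eq_iff)
  qed
  have cardb: "\<And>\<pi>. \<pi> \<in> Q \<Longrightarrow> card (f ` \<pi>) = card \<pi>"
    using inj sub by (meson card_image inj_on_subset)
  show "card (standardize Q) = card Q" using injQ sd by (simp add: card_image)
  show "(\<Prod>\<beta>\<in>standardize Q. g (card \<beta>)) = (\<Prod>\<pi>\<in>Q. g (card \<pi>))"
    using injQ cardb by (simp add: sd prod.reindex)
  have "is_partition_of {1..card S} (standardize Q)"
    unfolding is_partition_of_def
  proof (intro conjI ballI impI)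
    fix \<beta> assume "\<beta> \<in> standardize Q" then show "\<beta> \<noteq> {}" using ne sd by auto
  next
    fix \<beta> \<gamma> assume a: "\<beta> \<in> standardize Q" "\<gamma> \<in> standardize Q" "\<beta> \<noteq> \<gamma>"
    then obtain \<pi> \<rho> where p: "\<pi> \<in> Q" "\<rho> \<in> Q" "\<beta> = f ` \<pi>" "\<gamma> = f ` \<rho>" using sd by auto
    then have "\<pi> \<noteq> \<rho>" using a by auto
    then have "\<pi> \<inter> \<rho> = {}" using dj p by auto
    then show "\<beta> \<inter> \<gamma> = {}" using p inj sub
      by (metis image_empty inj_on_image_Int)
  next
    show "\<Union> (standardize Q) = {1..card S}"
    proof -
      have "\<Union> (standardize Q) = f ` (\<Union>Q)" by (simp add: sd image_Union)
      then show ?thesis using rank_image[OF fin] U f_def by simp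
    qed
  qed
  moreover have "noncrossing (standardize Q)"
    unfolding noncrossing_def
  proof
    assume "\<exists>\<beta>\<in>standardize Q. \<exists>\<gamma>\<in>standardize Q. \<beta> \<noteq> \<gamma> \<and>
      (\<exists>a b c d. a < c \<and> c < b \<and> b < d \<and> a \<in> \<beta> \<and> b \<in> \<beta> \<and> c \<in> \<gamma> \<and> d \<in> \<gamma>)"
    then obtain \<beta> \<gamma> a b c d where p0: "\<beta> \<in> standardize Q" "\<gamma> \<in> standardize Q" "\<beta> \<noteq> \<gamma>"
      "a < c" "c < b" "b < d" "a \<in> \<beta>" "b \<in> \<beta>" "c \<in> \<gamma>" "d \<in> \<gamma>" by blast
    then obtain \<pi> \<rho> where pr: "\<pi> \<in> Q" "\<rho> \<in> Q" "\<beta> = f ` \<pi>" "\<gamma> = f ` \<rho>" using sd by auto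
    have p: "\<pi> \<in> Q" "\<rho> \<in> Q" "f ` \<pi> \<noteq> f ` \<rho>"
      "a < c" "c < b" "b < d" "a \<in> f ` \<pi>" "b \<in> f ` \<pi>" "c \<in> f ` \<rho>" "d \<in> f ` \<rho>"
      using p0 pr by auto
    obtain a' where qa: "a' \<in> \<pi>" "a = f a'" using p(7) by blast
    obtain b' where qb: "b' \<in> \<pi>" "b = f b'" using p(8) by blast
    obtain c' where qc: "c' \<in> \<rho>" "c = f c'" using p(9) by blast
    obtain d' where qd: "d' \<in> \<rho>" "d = f d'" using p(10) by blast
    note q = qa qb qc qd
    have fS: "\<And>x y. x \<in> S \<Longrightarrow> y \<in> S \<Longrightarrow> f x < f y \<longleftrightarrow> x < y"
      by (simp add: f_def rank_less_iff fin)
    have S: "a' \<in> S" "b' \<in> S" "c' \<in> S" "d' \<in> S" using q p(1,2) sub by auto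
    have o1: "a' < c'" using p(4) fS[OF S(1) S(3)] unfolding qa(2) qc(2) by blast
    have o2: "c' < b'" using p(5) fS[OF S(3) S(2)] unfolding qb(2) qc(2) by blast
    have o3: "b' < d'" using p(6) fS[OF S(2) S(4)] unfolding qb(2) qd(2) by blast
    have o4: "\<pi> \<noteq> \<rho>" using p(3) by auto
    have "\<exists>\<pi>\<in>Q. \<exists>\<rho>\<in>Q. \<pi> \<noteq> \<rho> \<and>
     (\<exists>a b c d. a < c \<and> c < b \<and> b < d \<and> a \<in> \<pi> \<and> b \<in> \<pi> \<and> c \<in> \<rho> \<and> d \<in> \<rho>)"
      apply (rule bexI[OF _ p(1)], rule bexI[OF _ p(2)])
      apply (rule conjI[OF o4], rule exI[of _ a'], rule exI[of _ b'], rule exI[of _ c'], rule exI[of _ d'])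
      by (simp_all add: o1 o2 o3 o4 qa(1) qb(1) qc(1) qd(1))
    then show False using nc unfolding noncrossing_def by blast
  qed
  ultimately show "standardize Q \<in> NCP (card S)" by (simp add: NCP_def)
qed


lemma NCP_facts:
  assumes "P \<in> NCP n"
  shows "\<Union>P = {1..n}" "finite P" "\<And>\<pi>. \<pi> \<in> P \<Longrightarrow> finite \<pi>"
    "\<And>\<pi>. \<pi> \<in> P \<Longrightarrow> \<pi> \<noteq> {}"
    "\<And>\<pi> \<rho>. \<pi> \<in> P \<Longrightarrow> \<rho> \<in> P \<Longrightarrow> \<pi> \<noteq> \<rho> \<Longrightarrow> \<pi> \<inter> \<rho> = {}"
    "noncrossing P" "is_partition_of {1..n} P"
proof -
  show U: "\<Union>P = {1..n}" using assms by (simp add: NCP_def is_partition_of_def)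
  show "finite P" using U by (metis finite_UnionD finite_atLeastAtMost)
  show "\<And>\<pi>. \<pi> \<in> P \<Longrightarrow> finite \<pi>" using U by (metis Union_upper finite_atLeastAtMost finite_subset)
  show "\<And>\<pi>. \<pi> \<in> P \<Longrightarrow> \<pi> \<noteq> {}" using assms by (simp add: NCP_def is_partition_of_def)
  show "\<And>\<pi> \<rho>. \<pi> \<in> P \<Longrightarrow> \<rho> \<in> P \<Longrightarrow> \<pi> \<noteq> \<rho> \<Longrightarrow> \<pi> \<inter> \<rho> = {}"
    using assms by (simp add: NCP_def is_partition_of_def)
  show "noncrossing P" "is_partition_of {1..n} P" using assms by (simp_all add: NCP_def)
qed


lemma std_id:
  assumes "P \<in> NCP n"
  shows "standardize P = P"
proof -
  have U: "\<Union>P = {1..n}" using NCP_facts[OF assms] by simp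
  have r: "rank {1..n} x = x" if "x \<in> {1..n}" for x
  proof -
    have "{y \<in> {1..n}. y < x} = {1..<x}" using that by auto
    then show ?thesis using that by (simp add: rank_def)
  qed
  have "(\<lambda>\<pi>. rank {1..n} ` \<pi>) ` P = (\<lambda>\<pi>. \<pi>) ` P"
  proof (rule image_cong[OF refl])
    fix \<pi> assume "\<pi> \<in> P"
    then have "\<pi> \<subseteq> {1..n}" using U by auto
    then show "rank {1..n} ` \<pi> = \<pi>" using r by (simp add: subset_iff image_def)
  qed
  then show ?thesis by (simp add: standardize_def U)
qed


lemma std_single:
  assumes "finite \<pi>" "\<pi> \<noteq> {}"
  shows "standardize {\<pi>} = I_part (card \<pi>)"
  using rank_image[OF assms(1)] by (simp add: standardize_def I_part_def)


lemma nc_transfer: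
  assumes nc: "noncrossing Q"
    and h: "\<And>\<beta> \<gamma>. \<beta> \<in> Q' \<Longrightarrow> \<gamma> \<in> Q' \<Longrightarrow> \<beta> \<noteq> \<gamma> \<Longrightarrow>
       \<exists>\<pi>\<in>Q. \<exists>\<rho>\<in>Q. \<pi> \<noteq> \<rho> \<and> \<beta> \<subseteq> \<pi> \<and> \<gamma> \<subseteq> \<rho>"
  shows "noncrossing Q'"
  unfolding noncrossing_def
proof
  assume "\<exists>\<beta>\<in>Q'. \<exists>\<gamma>\<in>Q'. \<beta> \<noteq> \<gamma> \<and>
      (\<exists>a b c d. a < c \<and> c < b \<and> b < d \<and> a \<in> \<beta> \<and> b \<in> \<beta> \<and> c \<in> \<gamma> \<and> d \<in> \<gamma>)"
  then obtain \<beta> \<gamma> a b c d where p0: "\<beta> \<in> Q'" "\<gamma> \<in> Q'" "\<beta> \<noteq> \<gamma>"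
      "a < c" "c < b" "b < d" "a \<in> \<beta>" "b \<in> \<beta>" "c \<in> \<gamma>" "d \<in> \<gamma>" by blast
  obtain \<pi> \<rho> where pr: "\<pi> \<in> Q" "\<rho> \<in> Q" "\<pi> \<noteq> \<rho>" "\<beta> \<subseteq> \<pi>" "\<gamma> \<subseteq> \<rho>"
    using h[OF p0(1-3)] by blast
  have "\<exists>\<pi>\<in>Q. \<exists>\<rho>\<in>Q. \<pi> \<noteq> \<rho> \<and>
     (\<exists>a b c d. a < c \<and> c < b \<and> b < d \<and> a \<in> \<pi> \<and> b \<in> \<pi> \<and> c \<in> \<rho> \<and> d \<in> \<rho>)"
    apply (rule bexI[OF _ pr(1)], rule bexI[OF _ pr(2)])
    apply (rule conjI[OF pr(3)], rule exI[of _ a], rule exI[of _ b], rule exI[of _ c], rule exI[of _ d])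
    using p0 pr(4,5) by blast
  then show False using nc unfolding noncrossing_def by blast
qed


lemma sub_partition:
  assumes "is_partition_of S P" "noncrossing P" "L \<subseteq> P"
  shows "is_partition_of (\<Union>L) L" "noncrossing L" "restrict_part P (\<Union>L) = L"
proof -
  show "is_partition_of (\<Union>L) L" using assms(1,3) unfolding is_partition_of_def
    by (meson subsetD)
  show "noncrossing L" by (rule nc_transfer[OF assms(2)]) (use assms(3) in blast)
  show "restrict_part P (\<Union>L) = L"
  proof
    show "restrict_part P (\<Union>L) \<subseteq> L"
    proof
      fix x assume "x \<in> restrict_part P (\<Union>L)"
      then obtain \<pi> where p: "\<pi> \<in> P" "x = \<pi> \<inter> \<Union>L" "\<pi> \<inter> \<Union>L \<noteq> {}"
        by (auto simp: restrict_part_def)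
      then obtain \<rho> where r: "\<rho> \<in> L" "\<pi> \<inter> \<rho> \<noteq> {}" by auto
      moreover have "\<rho> \<in> P" using r assms(3) by auto
      moreover have djP: "\<And>\<pi> \<rho>. \<pi> \<in> P \<Longrightarrow> \<rho> \<in> P \<Longrightarrow> \<pi> \<noteq> \<rho> \<Longrightarrow> \<pi> \<inter> \<rho> = {}"
        using assms(1) by (simp add: is_partition_of_def)
      have "\<pi> = \<rho>"
      proof (rule ccontr)
        assume ne: "\<pi> \<noteq> \<rho>"
        have "\<pi> \<inter> \<rho> = {}" by (rule djP[OF p(1) \<open>\<rho> \<in> P\<close> ne])
        with r(2) show False by (rule notE)
      qed
      then have "\<pi> \<in> L" using r(1) by simp
      then have "\<pi> \<subseteq> \<Union>L" by (rule Union_upper)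
      then have "x = \<pi>" using p(2) by (simp add: Int_absorb2)
      then show "x \<in> L" using \<open>\<pi> \<in> L\<close> by simp
    qed
  next
    show "L \<subseteq> restrict_part P (\<Union>L)"
    proof
      fix x assume "x \<in> L"
      then have h: "x \<in> P" "x \<inter> \<Union>L = x" "x \<noteq> {}" using assms(1,3) unfolding is_partition_of_def by auto
      show "x \<in> restrict_part P (\<Union>L)" unfolding restrict_part_def mem_Collect_eq
        by (rule exI[of _ x]) (simp add: h)
    qed
  qed
qed


lemma restrict_partition:
  assumes "is_partition_of S P" "noncrossing P" "X \<subseteq> S"
  shows "is_partition_of X (restrict_part P X)" "noncrossing (restrict_part P X)"
proof -
  have ne: "\<forall>\<pi>\<in>restrict_part P X. \<pi> \<noteq> {}" by (auto simp: restrict_part_def)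
  have dj: "\<forall>\<pi>\<in>restrict_part P X. \<forall>\<rho>\<in>restrict_part P X. \<pi> \<noteq> \<rho> \<longrightarrow> \<pi> \<inter> \<rho> = {}"
    using assms(1) by (auto simp: restrict_part_def is_partition_of_def)
  have un: "\<Union>(restrict_part P X) = X"
  proof
    show "\<Union>(restrict_part P X) \<subseteq> X" by (auto simp: restrict_part_def)
    show "X \<subseteq> \<Union>(restrict_part P X)"
    proof
      fix y assume "y \<in> X"
      then have "y \<in> \<Union>P" using assms(1,3) by (auto simp: is_partition_of_def)
      then obtain \<pi> where "\<pi> \<in> P" "y \<in> \<pi>" by auto
      then show "y \<in> \<Union>(restrict_part P X)" using \<open>y \<in> X\<close>
        unfolding restrict_part_def by blast
    qed
  qed
  show "is_partition_of X (restrict_part P X)" using ne dj un by (simp add: is_partition_of_def)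
  show "noncrossing (restrict_part P X)"
  proof (rule nc_transfer[OF assms(2)])
    fix \<beta> \<gamma> assume "\<beta> \<in> restrict_part P X" "\<gamma> \<in> restrict_part P X" "\<beta> \<noteq> \<gamma>"
    then obtain \<pi> \<rho> where "\<pi> \<in> P" "\<rho> \<in> P" "\<beta> = \<pi> \<inter> X" "\<gamma> = \<rho> \<inter> X"
      by (auto simp: restrict_part_def)
    then show "\<exists>\<pi>\<in>P. \<exists>\<rho>\<in>P. \<pi> \<noteq> \<rho> \<and> \<beta> \<subseteq> \<pi> \<and> \<gamma> \<subseteq> \<rho>"
      using \<open>\<beta> \<noteq> \<gamma>\<close> by blast
  qed
qed


lemma card_less_nth:
  assumes "finite S" "xs = sorted_list_of_set S" "j < length xs"
  shows "card {x\<in>S. x < xs ! j} = j"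
proof -
  have sw: "sorted_wrt (<) xs" using assms by (simp add: strict_sorted_list_of_set)
  have set: "set xs = S" using assms by simp
  have "{x\<in>S. x < xs ! j} = (!) xs ` {..<j}"
  proof
    show "{x\<in>S. x < xs ! j} \<subseteq> (!) xs ` {..<j}"
    proof
      fix x assume x: "x \<in> {x\<in>S. x < xs ! j}"
      then obtain m where m: "m < length xs" "x = xs ! m" using set by (auto simp: in_set_conv_nth)
      have "m < j"
      proof (rule ccontr)
        assume "\<not> m < j"
        then have "j = m \<or> j < m" by auto
        then have "xs ! j \<le> xs ! m" using sorted_wrt_nth_less[OF sw _ m(1)] by fastforce
        then show False using x m by auto
      qed
      then show "x \<in> (!) xs ` {..<j}" using m by auto
    qed
  next
    show "(!) xs ` {..<j} \<subseteq> {x\<in>S. x < xs ! j}"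
      using sorted_wrt_nth_less[OF sw _ assms(3)] set assms(3) by auto
  qed
  moreover have "inj_on ((!) xs) {..<j}"
    using distinct_sorted_list_of_set[of S] assms by (auto simp: inj_on_def nth_eq_iff_index_eq)
  ultimately show ?thesis by (simp add: card_image)
qed


lemma gap_char:
  assumes fin: "finite (\<Union>L)" and i: "i \<le> card (\<Union>L)"
  shows "gap P L i = {y \<in> \<Union>P. y \<notin> \<Union>L \<and> card {x\<in>\<Union>L. x < y} = i}"
proof -
  define S where "S = \<Union>L"
  define xs where "xs = sorted_list_of_set S"
  have fS: "finite S" using fin S_def by simp
  have len: "length xs = card S" by (simp add: xs_def)
  have set: "set xs = S" using fS xs_def by simp
  have sw: "sorted_wrt (<) xs" by (simp add: xs_def strict_sorted_list_of_set)
  define cnt where "cnt y = card {x\<in>S. x < y}" for y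
  have cmono: "cnt y \<le> cnt z" if "y \<le> z" for y z
    unfolding cnt_def using that fS by (intro card_mono) auto
  have cj: "cnt (xs ! j) = j" if "j < length xs" for j
    using card_less_nth[OF fS xs_def that] cnt_def by simp
  have iff: "((i = 0 \<or> xs ! (i - 1) < y) \<and> (i = length xs \<or> y < xs ! i)) \<longleftrightarrow> (y \<notin> S \<and> cnt y = i)" for y
  proof
    assume a: "(i = 0 \<or> xs ! (i - 1) < y) \<and> (i = length xs \<or> y < xs ! i)"
    have notS: "y \<notin> S"
    proof
      assume "y \<in> S"
      then obtain m where m: "m < length xs" "y = xs ! m" using set by (auto simp: in_set_conv_nth)
      have "i = 0 \<or> i - 1 < m"
      proof (cases "i = 0")
        case False
        then have "xs ! (i - 1) < xs ! m" using a m by auto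
        moreover have "i - 1 < length xs" using False i len S_def by auto
        ultimately show ?thesis
          by (metis m(1) sw sorted_wrt_nth_less not_less_iff_gr_or_eq less_asym)
      qed simp
      moreover have "i = length xs \<or> m < i"
      proof (cases "i = length xs")
        case False
        then have "xs ! m < xs ! i" using a m by auto
        moreover have "i < length xs" using False i len S_def by auto
        ultimately show ?thesis
          by (metis m(1) sw sorted_wrt_nth_less not_less_iff_gr_or_eq less_asym)
      qed simp
      ultimately show False using m(1) by auto
    qed
    have c1: "i \<le> cnt y"
    proof (cases "i = 0")
      case False
      then have lt: "xs ! (i - 1) < y" and il: "i - 1 < length xs" using a i len S_def by auto
      have "{x\<in>S. x < xs ! (i-1)} \<union> {xs ! (i - 1)} \<subseteq> {x\<in>S. x < y}"
        using lt il set by auto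
      moreover have "card ({x\<in>S. x < xs ! (i-1)} \<union> {xs ! (i - 1)}) = i"
        using cj[OF il] cnt_def fS False by simp
      ultimately show ?thesis unfolding cnt_def
        by (metis (no_types, lifting) card_mono fS finite_subset mem_Collect_eq subsetI)
    qed simp
    have c2: "cnt y \<le> i"
    proof (cases "i = length xs")
      case True
      then show ?thesis unfolding cnt_def using fS len by (simp add: card_mono)
    next
      case False
      then have "y < xs ! i" "i < length xs" using a i len S_def by auto
      then show ?thesis using cmono[of y "xs ! i"] cj by simp
    qed
    show "y \<notin> S \<and> cnt y = i" using notS c1 c2 by simp
  next
    assume b: "y \<notin> S \<and> cnt y = i"
    have "i = 0 \<or> xs ! (i - 1) < y"
    proof (rule ccontr)
      assume c: "\<not> (i = 0 \<or> xs ! (i - 1) < y)"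
      then have il: "i - 1 < length xs" using i len S_def by auto
      have "xs ! (i - 1) \<in> S" using il set nth_mem by blast
      then have "y \<noteq> xs ! (i - 1)" using b by auto
      then have "y < xs ! (i - 1)" using c by auto
      then have "cnt y \<le> cnt (xs ! (i - 1))" using cmono by simp
      then have "cnt y \<le> i - 1" using cj[OF il] by simp
      then show False using b c by auto
    qed
    moreover have "i = length xs \<or> y < xs ! i"
    proof (rule ccontr)
      assume c: "\<not> (i = length xs \<or> y < xs ! i)"
      then have il: "i < length xs" using i len S_def by auto
      have "xs ! i \<in> S" using il set nth_mem by blast
      then have "y \<noteq> xs ! i" using b by auto
      then have lt: "xs ! i < y" using c by auto
      have "{x\<in>S. x < xs ! i} \<union> {xs ! i} \<subseteq> {x\<in>S. x < y}"
        using lt il set by auto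
      moreover have "card ({x\<in>S. x < xs ! i} \<union> {xs ! i}) = i + 1"
        using cj[OF il] cnt_def fS by simp
      ultimately have "i + 1 \<le> cnt y" unfolding cnt_def
        by (metis (no_types, lifting) card_mono fS finite_subset mem_Collect_eq subsetI)
      then show False using b by simp
    qed
    ultimately show "(i = 0 \<or> xs ! (i - 1) < y) \<and> (i = length xs \<or> y < xs ! i)" by simp
  qed
  show ?thesis
    unfolding gap_def Let_def using iff by (simp add: xs_def S_def cnt_def)
qed


lemma trancl_fix:
  assumes "(a, b) \<in> r\<^sup>+" "\<And>y. (y, b) \<in> r \<Longrightarrow> y = b"
  shows "a = b"
  using assms(1)
proof (induction rule: converse_trancl_induct)
  case (base y) then show ?case using assms(2) by blast
next
  case (step y z) then show ?case using assms(2) by blast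
qed

lemma nc_contra:
  assumes "noncrossing P" "\<pi> \<in> P" "\<rho> \<in> P" "\<pi> \<noteq> \<rho>" "a < c" "c < b" "b < d"
    "a \<in> \<pi>" "b \<in> \<pi>" "c \<in> \<rho>" "d \<in> \<rho>"
  shows False
proof -
  have "\<exists>\<pi>\<in>P. \<exists>\<rho>\<in>P. \<pi> \<noteq> \<rho> \<and>
     (\<exists>a b c d. a < c \<and> c < b \<and> b < d \<and> a \<in> \<pi> \<and> b \<in> \<pi> \<and> c \<in> \<rho> \<and> d \<in> \<rho>)"
    apply (rule bexI[OF _ assms(2)], rule bexI[OF _ assms(3)])
    apply (rule conjI[OF assms(4)], rule exI[of _ a], rule exI[of _ b], rule exI[of _ c], rule exI[of _ d])
    by (simp add: assms)
  then show False using assms(1) unfolding noncrossing_def by blast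
qed

locale firstblock =
  fixes P :: ncpart and n :: nat and \<pi>1 :: "nat set"
  assumes P: "P \<in> NCP n" and p1: "\<pi>1 \<in> P" and one: "1 \<in> \<pi>1"
begin

lemma U: "\<Union>P = {1..n}" using NCP_facts[OF P] by simp
lemma finP: "finite P" using NCP_facts[OF P] by simp
lemma finb: "\<sigma> \<in> P \<Longrightarrow> finite \<sigma>" using NCP_facts[OF P] by simp
lemma neb: "\<sigma> \<in> P \<Longrightarrow> \<sigma> \<noteq> {}" using NCP_facts[OF P] by simp
lemma djb: "\<sigma> \<in> P \<Longrightarrow> \<rho> \<in> P \<Longrightarrow> \<sigma> \<noteq> \<rho> \<Longrightarrow> \<sigma> \<inter> \<rho> = {}" using NCP_facts[OF P] by simp
lemma nc: "noncrossing P" using NCP_facts[OF P] by simp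
lemma part: "is_partition_of {1..n} P" using NCP_facts[OF P] by simp
lemma sub: "\<sigma> \<in> P \<Longrightarrow> \<sigma> \<subseteq> {1..n}" using U by auto

lemma other_gt1:
  assumes "\<sigma> \<in> P" "\<sigma> \<noteq> \<pi>1" "y \<in> \<sigma>"
  shows "1 < y"
proof -
  have "y \<noteq> 1" using djb[OF assms(1) p1 assms(2)] assms(3) one by auto
  moreover have "1 \<le> y" using sub[OF assms(1)] assms(3) by auto
  ultimately show ?thesis by simp
qed

lemma no_arrow_in:
  assumes "\<sigma> \<in> P" "Conv \<sigma> \<inter> \<pi>1 \<noteq> {}"
  shows "\<sigma> = \<pi>1"
proof (rule ccontr)
  assume ne: "\<sigma> \<noteq> \<pi>1"
  obtain b where b: "b \<in> \<pi>1" "Min \<sigma> \<le> b" "b \<le> Max \<sigma>" using assms(2) by (auto simp: Conv_def)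
  have fin: "finite \<sigma>" "\<sigma> \<noteq> {}" using finb neb assms(1) by auto
  have mins: "Min \<sigma> \<in> \<sigma>" "Max \<sigma> \<in> \<sigma>" using fin by auto
  have bn: "b \<notin> \<sigma>" using djb[OF assms(1) p1 ne] b(1) by auto
  have "Min \<sigma> < b" using b(2) bn mins by (cases "Min \<sigma> = b") auto
  moreover have "b < Max \<sigma>" using b(3) bn mins by (cases "Max \<sigma> = b") auto
  moreover have "1 < Min \<sigma>" using other_gt1[OF assms(1) ne mins(1)] .
  ultimately show False using nc_contra[OF nc p1 assms(1) ne[symmetric] _ _ _ one b(1) mins] by blast
qed

lemma lowerset1: "lowerset P {\<pi>1}"
  unfolding lowerset_def
proof (intro conjI ballI allI impI)
  show "{\<pi>1} \<subseteq> P" using p1 by simp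
next
  fix \<pi> \<sigma> assume "\<pi> \<in> {\<pi>1}" "(\<sigma>, \<pi>) \<in> arrow P"
  then have "(\<sigma>, \<pi>1) \<in> {(\<pi>, \<rho>). \<pi> \<in> P \<and> \<rho> \<in> P \<and> Conv \<pi> \<inter> \<rho> \<noteq> {}}\<^sup>+"
    by (simp add: arrow_def)
  then have "\<sigma> = \<pi>1" by (rule trancl_fix) (use no_arrow_in in blast)
  then show "\<sigma> \<in> {\<pi>1}" by simp
qed

definition cnt :: "nat \<Rightarrow> nat" where "cnt y = card {x\<in>\<pi>1. x < y}"

lemma cnt_lt:
  assumes "\<sigma> \<in> P" "\<sigma> \<noteq> \<pi>1" "y \<in> \<sigma>" "z \<in> \<sigma>" "y < z"
  shows "cnt y = cnt z"
proof -
  have eq: "{x\<in>\<pi>1. x < y} = {x\<in>\<pi>1. x < z}"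
  proof (rule ccontr)
    assume "{x\<in>\<pi>1. x < y} \<noteq> {x\<in>\<pi>1. x < z}"
    then obtain x where x: "x \<in> \<pi>1" "y \<le> x" "x < z" using assms(5) by force
    have "x \<noteq> y" using djb[OF assms(1) p1 assms(2)] x(1) assms(3) by auto
    then have "y < x" using x by simp
    then show False
      using nc_contra[OF nc p1 assms(1) assms(2)[symmetric] other_gt1[OF assms(1,2,3)] _ x(3) one x(1) assms(3,4)]
      by blast
  qed
  then show ?thesis by (simp add: cnt_def)
qed

lemma cnt_const:
  assumes "\<sigma> \<in> P" "\<sigma> \<noteq> \<pi>1" "y \<in> \<sigma>" "z \<in> \<sigma>"
  shows "cnt y = cnt z"
proof (cases y z rule: linorder_cases)
  case less then show ?thesis using cnt_lt[OF assms less] by simp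
next
  case equal then show ?thesis by simp
next
  case greater then show ?thesis using cnt_lt[OF assms(1,2,4,3) greater] by simp
qed

abbreviation "c \<equiv> card \<pi>1"
abbreviation "g i \<equiv> gap P {\<pi>1} i"

lemma finp1: "finite \<pi>1" using finb p1 by simp

lemma g_char: "i \<le> c \<Longrightarrow> g i = {y \<in> {1..n}. y \<notin> \<pi>1 \<and> cnt y = i}"
  using gap_char[of "{\<pi>1}" i P] finp1 U by (simp add: cnt_def)

lemma cnt_le: "cnt y \<le> c"
  unfolding cnt_def using finp1 by (intro card_mono) auto

definition B :: "nat \<Rightarrow> nat set set" where "B i = {\<sigma>\<in>P. \<sigma> \<noteq> \<pi>1 \<and> \<sigma> \<subseteq> g i}"

lemma restr_g:
  assumes "i \<le> c"
  shows "restrict_part P (g i) = B i"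
proof
  show "restrict_part P (g i) \<subseteq> B i"
  proof
    fix u assume "u \<in> restrict_part P (g i)"
    then obtain \<sigma> where s: "\<sigma> \<in> P" "u = \<sigma> \<inter> g i" "\<sigma> \<inter> g i \<noteq> {}"
      unfolding restrict_part_def by blast
    then obtain y where y: "y \<in> \<sigma>" "y \<in> g i" by blast
    have yc: "y \<notin> \<pi>1" "cnt y = i" using y(2) g_char[OF assms] by auto
    have ne: "\<sigma> \<noteq> \<pi>1" using y(1) yc(1) by auto
    have "\<sigma> \<subseteq> g i"
    proof
      fix z assume z: "z \<in> \<sigma>"
      have "z \<in> {1..n}" using sub[OF s(1)] z by auto
      moreover have "z \<notin> \<pi>1" using djb[OF s(1) p1 ne] z by auto
      moreover have "cnt z = i" using cnt_const[OF s(1) ne y(1) z] yc by simp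
      ultimately show "z \<in> g i" using g_char[OF assms] by simp
    qed
    then have "u = \<sigma>" using s(2) by auto
    then show "u \<in> B i" using s(1) ne \<open>\<sigma> \<subseteq> g i\<close> by (simp add: B_def)
  qed
next
  show "B i \<subseteq> restrict_part P (g i)"
  proof
    fix \<sigma> assume "\<sigma> \<in> B i"
    then have h: "\<sigma> \<in> P" "\<sigma> \<inter> g i = \<sigma>" "\<sigma> \<noteq> {}" using neb by (auto simp: B_def)
    show "\<sigma> \<in> restrict_part P (g i)" unfolding restrict_part_def mem_Collect_eq
      by (rule exI[of _ \<sigma>]) (simp add: h)
  qed
qed

lemma g_sub: "i \<le> c \<Longrightarrow> g i \<subseteq> {1..n}" using g_char by auto

lemma Ubar_def': "cut_Ubar P {\<pi>1} = map (\<lambda>i. standardize (restrict_part P (g i)))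
      (filter (\<lambda>i. g i \<noteq> {}) [0..<c + 1])"
  by (simp add: cut_Ubar_def)

lemma Ubar_elem:
  assumes "i \<le> c"
  shows "standardize (restrict_part P (g i)) \<in> NCP (card (g i))"
    "(\<Prod>\<beta>\<in>standardize (restrict_part P (g i)). h (card \<beta>)) = (\<Prod>\<sigma>\<in>B i. h (card \<sigma>))"
proof -
  have fin: "finite (g i)" using g_sub[OF assms] finite_subset by blast
  note rp = restrict_partition[OF part nc g_sub[OF assms]]
  show "standardize (restrict_part P (g i)) \<in> NCP (card (g i))" using std_NCP(1)[OF fin rp] .
  show "(\<Prod>\<beta>\<in>standardize (restrict_part P (g i)). h (card \<beta>)) = (\<Prod>\<sigma>\<in>B i. h (card \<sigma>))"
    using std_NCP(3)[OF fin rp] restr_g[OF assms] by simp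
qed

lemma Ubar_multi: "multipartition (cut_Ubar P {\<pi>1})"
  unfolding multipartition_def Ubar_def'
proof
  fix Q assume "Q \<in> set (map (\<lambda>i. standardize (restrict_part P (g i))) (filter (\<lambda>i. g i \<noteq> {}) [0..<c + 1]))"
  then have "Q \<in> (\<lambda>i. standardize (restrict_part P (g i))) ` {i\<in>{0..<c+1}. g i \<noteq> {}}"
    by (simp only: set_map set_filter set_upt)
  then obtain i where i0: "i \<in> {i\<in>{0..<c+1}. g i \<noteq> {}}" "Q = standardize (restrict_part P (g i))"
    by blast
  then have i: "i \<le> c" "g i \<noteq> {}" "Q = standardize (restrict_part P (g i))" by auto
  have fin: "finite (g i)" using g_sub[OF i(1)] finite_subset by blast
  have "card (g i) \<ge> 1" using fin i(2) by (simp add: Suc_le_eq card_gt_0_iff)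
  then show "nonempty_ncp Q" using Ubar_elem(1)[OF i(1)] i(3) by (auto simp: nonempty_ncp_def)
qed

lemma Ubar_prod:
  fixes h :: "nat \<Rightarrow> 'b::comm_monoid_mult"
  shows "prod_list (map (\<lambda>Q. \<Prod>\<beta>\<in>Q. h (card \<beta>)) (cut_Ubar P {\<pi>1})) = (\<Prod>\<sigma>\<in>P - {\<pi>1}. h (card \<sigma>))"
proof -
  define I where "I = {i\<in>{0..<c+1}. g i \<noteq> {}}"
  have dist: "distinct (filter (\<lambda>i. g i \<noteq> {}) [0..<c + 1])" by (simp del: upt_Suc)
  have setI: "set (filter (\<lambda>i. g i \<noteq> {}) [0..<c + 1]) = I" by (simp only: set_filter set_upt I_def)
  have "prod_list (map (\<lambda>Q. \<Prod>\<beta>\<in>Q. h (card \<beta>)) (cut_Ubar P {\<pi>1}))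
      = prod_list (map (\<lambda>i. \<Prod>\<beta>\<in>standardize (restrict_part P (g i)). h (card \<beta>)) (filter (\<lambda>i. g i \<noteq> {}) [0..<c + 1]))"
    by (simp add: Ubar_def' comp_def)
  also have "\<dots> = (\<Prod>i\<in>I. \<Prod>\<beta>\<in>standardize (restrict_part P (g i)). h (card \<beta>))"
    using prod.distinct_set_conv_list[OF dist] unfolding setI by (rule sym)
  also have "\<dots> = (\<Prod>i\<in>I. \<Prod>\<sigma>\<in>B i. h (card \<sigma>))"
    by (rule prod.cong[OF refl]) (simp add: Ubar_elem(2) I_def)
  also have "\<dots> = (\<Prod>\<sigma>\<in>\<Union>(B ` I). h (card \<sigma>))"
  proof (rule prod.UNION_disjoint[symmetric])
    show "finite I" by (simp add: I_def)
    show "\<forall>i\<in>I. finite (B i)" using finP by (simp add: B_def)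
    show "\<forall>i\<in>I. \<forall>j\<in>I. i \<noteq> j \<longrightarrow> B i \<inter> B j = {}"
    proof (intro ballI impI)
      fix i j assume ij: "i \<in> I" "j \<in> I" "i \<noteq> j"
      show "B i \<inter> B j = {}"
      proof (rule ccontr)
        assume "B i \<inter> B j \<noteq> {}"
        then obtain \<sigma> where s: "\<sigma> \<in> P" "\<sigma> \<subseteq> g i" "\<sigma> \<subseteq> g j" by (auto simp: B_def)
        obtain y where "y \<in> \<sigma>" using neb[OF s(1)] by blast
        then have "cnt y = i" "cnt y = j" using s ij g_char by (auto simp: I_def)
        then show False using ij by simp
      qed
    qed
  qed
  also have "\<Union>(B ` I) = P - {\<pi>1}"
  proof
    show "\<Union>(B ` I) \<subseteq> P - {\<pi>1}" by (auto simp: B_def)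
    show "P - {\<pi>1} \<subseteq> \<Union>(B ` I)"
    proof
      fix \<sigma> assume s: "\<sigma> \<in> P - {\<pi>1}"
      then have s1: "\<sigma> \<in> P" "\<sigma> \<noteq> \<pi>1" by auto
      obtain y where y: "y \<in> \<sigma>" using neb[OF s1(1)] by blast
      define i where "i = cnt y"
      have ic: "i \<le> c" using cnt_le i_def by simp
      have "\<sigma> \<subseteq> g i"
      proof
        fix z assume z: "z \<in> \<sigma>"
        have "z \<in> {1..n}" using sub[OF s1(1)] z by auto
        moreover have "z \<notin> \<pi>1" using djb[OF s1(1) p1 s1(2)] z by auto
        moreover have "cnt z = i" using cnt_const[OF s1 y z] i_def by simp
        ultimately show "z \<in> g i" using g_char[OF ic] by simp
      qed
      then have "g i \<noteq> {}" using y by auto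
      then have "i \<in> I" using ic by (simp add: I_def)
      then show "\<sigma> \<in> \<Union>(B ` I)" using s1 \<open>\<sigma> \<subseteq> g i\<close> by (auto simp: B_def)
    qed
  qed
  finally show ?thesis .
qed

end


lemma nonempty_ncpD:
  assumes "nonempty_ncp P" obtains m where "m \<ge> 1" "P \<in> NCP m"
  using assms by (auto simp: nonempty_ncp_def)

lemma cutL_low:
  assumes Q: "Q \<in> NCP m" and low: "lowerset Q L"
  shows "cut_L Q L = standardize L"
    "standardize L = {} \<longleftrightarrow> L = {}"
    "L \<noteq> {} \<Longrightarrow> nonempty_ncp (standardize L)"
    "card (standardize L) = card L"
    "finite L"
proof -
  have LQ: "L \<subseteq> Q" using low by (simp add: lowerset_def)
  note sp = sub_partition[OF NCP_facts(7)[OF Q] NCP_facts(6)[OF Q] LQ]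
  show "cut_L Q L = standardize L" by (simp add: cut_L_def sp(3))
  show "standardize L = {} \<longleftrightarrow> L = {}" by (simp add: standardize_def)
  have finU: "finite (\<Union>L)" using LQ NCP_facts(1)[OF Q]
    by (metis Union_mono finite_atLeastAtMost finite_subset)
  note st = std_NCP[OF finU sp(1) sp(2)]
  show "card (standardize L) = card L" using st(2) .
  show "finite L" using finU by (simp add: finite_UnionD)
  assume "L \<noteq> {}"
  then obtain \<beta> where "\<beta> \<in> L" by blast
  then have "\<beta> \<noteq> {}" "\<beta> \<subseteq> \<Union>L" using LQ NCP_facts(4)[OF Q] by auto
  then have "card (\<Union>L) \<ge> 1" using finU
    by (metis One_nat_def Suc_leI card_gt_0_iff subset_empty)
  then show "nonempty_ncp (standardize L)" using st(1) by (auto simp: nonempty_ncp_def)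
qed

lemma cutUbar_empty:
  assumes Q: "Q \<in> NCP m" "m \<ge> 1"
  shows "cut_Ubar Q {} = [Q]"
proof -
  have g: "gap Q {} 0 = \<Union>Q" by (auto simp: gap_def)
  have ne: "\<Union>Q \<noteq> {}" using NCP_facts(1)[OF Q(1)] Q(2) by auto
  have "restrict_part Q (\<Union>Q) = Q"
    using sub_partition(3)[OF NCP_facts(7)[OF Q(1)] NCP_facts(6)[OF Q(1)] subset_refl] .
  then show ?thesis using ne g std_id[OF Q(1)] by (simp add: cut_Ubar_def)
qed

lemma cutL_empty: "cut_L Q {} = {}"
  by (simp add: cut_L_def restrict_part_def standardize_def)

lemma concat_rep:
  assumes "\<forall>Q\<in>set rest. nonempty_ncp Q"
  shows "concat (map2 cut_Ubar rest (replicate (length rest) {})) = rest"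
  using assms
proof (induction rest)
  case Nil then show ?case by simp
next
  case (Cons Q rest)
  then obtain m where "m \<ge> 1" "Q \<in> NCP m" by (auto elim: nonempty_ncpD)
  then show ?case using Cons cutUbar_empty by simp
qed

lemma filter_rep: "filter (\<lambda>P. P \<noteq> {}) (map2 cut_L rest (replicate (length rest) {})) = []"
  by (induction rest) (simp_all add: cutL_empty)

lemma multi_finite:
  assumes "multipartition xs"
  shows "finite (multi_cuts xs)"
proof -
  have fin: "finite (\<Union>(set xs))"
  proof -
    have "\<forall>Q\<in>set xs. finite Q" using assms
      by (auto simp: multipartition_def nonempty_ncp_def dest: NCP_facts(2))
    then show ?thesis by simp
  qed
  have "multi_cuts xs \<subseteq> {Ls. set Ls \<subseteq> Pow (\<Union>(set xs)) \<and> length Ls = length xs}"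
  proof
    fix Ls assume "Ls \<in> multi_cuts xs"
    then have h: "length Ls = length xs" "\<forall>i<length xs. lowerset (xs ! i) (Ls ! i)"
      by (auto simp: multi_cuts_def)
    have "set Ls \<subseteq> Pow (\<Union>(set xs))"
    proof
      fix l assume "l \<in> set Ls"
      then obtain i where i: "i < length Ls" "l = Ls ! i" by (auto simp: in_set_conv_nth)
      then have "l \<subseteq> xs ! i" using h by (auto simp: lowerset_def)
      moreover have "xs ! i \<in> set xs" using i h by simp
      ultimately show "l \<in> Pow (\<Union>(set xs))" by auto
    qed
    then show "Ls \<in> {Ls. set Ls \<subseteq> Pow (\<Union>(set xs)) \<and> length Ls = length xs}" using h by simp
  qed
  moreover have "finite {Ls. set Ls \<subseteq> Pow (\<Union>(set xs)) \<and> length Ls = length xs}"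
    using fin by (simp add: finite_lists_length_eq)
  ultimately show ?thesis by (rule finite_subset)
qed

locale setting =
  fixes k :: "nat \<Rightarrow> 'a::comm_ring_1"
    and \<kappa> \<phi> :: "ncpart list \<Rightarrow> 'a"
  assumes kappa_inf: "infinitesimal_char \<kappa>"
    and kappa_I: "\<And>n. n \<ge> 1 \<Longrightarrow> \<kappa> [I_part n] = k n"
    and kappa_other: "\<And>P. nonempty_ncp P \<Longrightarrow> (\<forall>n\<ge>1. P \<noteq> I_part n) \<Longrightarrow> \<kappa> [P] = 0"
    and phi_fix: "\<And>x. multipartition x \<Longrightarrow> \<phi> x = counit x + prec \<kappa> \<phi> x"
begin

lemma phi_nil: "\<phi> [] = 1"
  using phi_fix[of "[]"] by (simp add: multipartition_def counit_def prec_def)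

lemma recursion:
  assumes mp: "multipartition (P # rest)" and P: "P \<in> NCP n" and p1: "\<pi>1 \<in> P" and one: "1 \<in> \<pi>1"
  shows "\<phi> (P # rest) = k (card \<pi>1) * \<phi> (cut_Ubar P {\<pi>1} @ rest)"
proof -
  interpret fb: firstblock P n \<pi>1 using P p1 one by unfold_locales
  define xs where "xs = P # rest"
  define A where "A = {Ls \<in> multi_cuts xs. 1 \<in> \<Union>(Ls ! 0)}"
  define T where "T Ls = \<kappa> (multi_L xs Ls) * \<phi> (multi_Ubar xs Ls)" for Ls
  define Ls0 where "Ls0 = {\<pi>1} # replicate (length rest) ({} :: nat set set)"
  have restncp: "\<forall>Q\<in>set rest. nonempty_ncp Q" using mp by (simp add: multipartition_def)
  have phi_eq: "\<phi> xs = sum T A"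
    using phi_fix[of xs] mp by (simp add: xs_def counit_def prec_def A_def T_def)
  have finA: "finite A" using multi_finite[OF mp] by (simp add: A_def xs_def)
  have Ls0A: "Ls0 \<in> A"
  proof -
    have "\<forall>i<length xs. lowerset (xs ! i) (Ls0 ! i)"
    proof (intro allI impI)
      fix i assume i: "i < length xs"
      show "lowerset (xs ! i) (Ls0 ! i)"
      proof (cases i)
        case 0 then show ?thesis using fb.lowerset1 by (simp add: xs_def Ls0_def)
      next
        case (Suc j) then show ?thesis using i by (simp add: xs_def Ls0_def lowerset_def)
      qed
    qed
    then show ?thesis using one by (simp add: A_def multi_cuts_def Ls0_def xs_def)
  qed
  have zero: "T Ls = 0" if LsA: "Ls \<in> A" and ne: "Ls \<noteq> Ls0" for Ls
  proof -
    have lenLs: "length Ls = Suc (length rest)" and lows: "\<forall>i<length xs. lowerset (xs ! i) (Ls ! i)"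
      and oneL: "1 \<in> \<Union>(Ls ! 0)"
      using LsA by (auto simp: A_def multi_cuts_def xs_def)
    then obtain L0 Lr where Ls: "Ls = L0 # Lr" by (cases Ls) auto
    have lenr: "length Lr = length rest" using lenLs Ls by simp
    have low0: "lowerset P L0" using lows Ls by (auto simp: xs_def)
    have lowr: "lowerset (rest ! i) (Lr ! i)" if "i < length rest" for i
      using lows[rule_format, of "Suc i"] that Ls by (simp add: xs_def)
    have restN: "\<exists>m. rest ! i \<in> NCP m" if "i < length rest" for i
      using restncp that by (auto simp: nonempty_ncp_def)
    have L0ne: "L0 \<noteq> {}" using oneL Ls by auto
    note c0 = cutL_low[OF P low0]
    define TT where "TT = filter (\<lambda>P. P \<noteq> {}) (map2 cut_L rest Lr)"
    have mL: "multi_L xs Ls = standardize L0 # TT"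
      using c0(1,2) L0ne by (simp add: multi_L_def xs_def Ls TT_def)
    have TTmp: "multipartition TT"
      unfolding multipartition_def
    proof
      fix x assume "x \<in> set TT"
      then have x: "x \<in> set (map2 cut_L rest Lr)" "x \<noteq> {}" by (auto simp: TT_def)
      then obtain i where i: "i < length rest" "x = cut_L (rest ! i) (Lr ! i)"
        using lenr by (auto simp: set_zip)
      obtain m where m: "rest ! i \<in> NCP m" using restN[OF i(1)] by blast
      note ci = cutL_low[OF m lowr[OF i(1)]]
      show "nonempty_ncp x" using ci x(2) i(2) by auto
    qed
    show ?thesis
    proof (cases "TT = []")
      case False
      have h: "\<forall>xs ys. multipartition xs \<and> multipartition ys \<and> xs \<noteq> [] \<and> ys \<noteq> [] \<longrightarrow> \<kappa> (xs @ ys) = 0"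
        using kappa_inf by (simp add: infinitesimal_char_def)
      have "multipartition [standardize L0]" using c0(3)[OF L0ne] by (simp add: multipartition_def)
      then have "\<kappa> ([standardize L0] @ TT) = 0" using h TTmp False by blast
      then show ?thesis by (simp add: T_def mL)
    next
      case True
      have "Lr ! i = {}" if i: "i < length rest" for i
      proof -
        have "cut_L (rest ! i) (Lr ! i) \<in> set (map2 cut_L rest Lr)"
          using i lenr by (auto simp: set_zip)
        then have "cut_L (rest ! i) (Lr ! i) = {}" using True
          by (auto simp: TT_def filter_empty_conv)
        moreover obtain m where m: "rest ! i \<in> NCP m" using restN[OF i] by blast
        ultimately show ?thesis using cutL_low(1,2)[OF m lowr[OF i]] by simp
      qed
      then have "Lr = replicate (length rest) {}" using lenr by (simp add: list_eq_iff_nth_eq)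
      then have L0n: "L0 \<noteq> {\<pi>1}" using ne Ls by (auto simp: Ls0_def)
      obtain \<beta> where b: "\<beta> \<in> L0" "1 \<in> \<beta>" using oneL Ls by auto
      have "\<beta> \<in> P" using b low0 by (auto simp: lowerset_def)
      then have "\<beta> = \<pi>1" using fb.djb[OF _ p1] b one by blast
      then have "{\<pi>1} \<subset> L0" using b L0n by auto
      then have "card L0 \<ge> 2" using c0(5)
        by (metis One_nat_def Suc_1 Suc_leI card_1_singleton_iff psubset_card_mono
              card.empty card.insert empty_iff finite.emptyI insert_absorb)
      then have "card (standardize L0) \<ge> 2" using c0(4) by simp
      then have "\<forall>m\<ge>1. standardize L0 \<noteq> I_part m" by (auto simp: I_part_def)
      then have "\<kappa> [standardize L0] = 0" using kappa_other c0(3)[OF L0ne] by blast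
      then show ?thesis by (simp add: T_def mL True)
    qed
  qed
  have "sum T A = T Ls0 + sum T (A - {Ls0})" using finA Ls0A by (simp add: sum.remove)
  also have "sum T (A - {Ls0}) = 0" using zero by (intro sum.neutral) auto
  finally have s: "\<phi> xs = T Ls0" using phi_eq by simp
  have c1: "card \<pi>1 \<ge> 1" using fb.finp1 one by (metis One_nat_def Suc_leI card_gt_0_iff empty_iff)
  have "multi_L xs Ls0 = [standardize {\<pi>1}]"
  proof -
    have cu: "cut_L P {\<pi>1} = standardize {\<pi>1}" using cutL_low(1)[OF P fb.lowerset1] .
    have ne: "standardize {\<pi>1} \<noteq> {}" by (simp add: standardize_def)
    show ?thesis using filter_rep[of rest] by (simp add: multi_L_def xs_def Ls0_def cu ne)
  qed
  also have "standardize {\<pi>1} = I_part (card \<pi>1)" using std_single fb.finp1 fb.neb[OF p1] by simp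
  finally have mL0: "\<kappa> (multi_L xs Ls0) = k (card \<pi>1)" using kappa_I c1 by simp
  have "multi_Ubar xs Ls0 = cut_Ubar P {\<pi>1} @ rest"
    using concat_rep[OF restncp] by (simp add: multi_Ubar_def xs_def Ls0_def)
  then show ?thesis using s mL0 by (simp add: T_def xs_def)
qed

end


definition Mz :: "ncpart list \<Rightarrow> nat" where
  "Mz xs = prod_list (map (\<lambda>Q. \<Prod>\<beta>\<in>Q. (2::nat)) xs)"

lemma Mz_pos: "Mz xs > 0"
  by (induction xs) (auto simp: Mz_def)

context setting
begin

lemma phi_prod:
  "multipartition xs \<Longrightarrow> \<phi> xs = prod_list (map (\<lambda>Q. \<Prod>\<beta>\<in>Q. k (card \<beta>)) xs)"
proof (induction "Mz xs" arbitrary: xs rule: less_induct)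
  case less
  show ?case
  proof (cases xs)
    case Nil then show ?thesis by (simp add: phi_nil)
  next
    case (Cons P rest)
    have mp: "multipartition (P # rest)" using less.prems Cons by simp
    then have "nonempty_ncp P" by (simp add: multipartition_def)
    then obtain n where n: "n \<ge> 1" "P \<in> NCP n" by (auto elim: nonempty_ncpD)
    then have "1 \<in> \<Union>P" using NCP_facts(1)[OF n(2)] by simp
    then obtain \<pi>1 where p1: "\<pi>1 \<in> P" "1 \<in> \<pi>1" by blast
    interpret fb: firstblock P n \<pi>1 using n p1 by unfold_locales
    define U where "U = cut_Ubar P {\<pi>1}"
    have rec: "\<phi> (P # rest) = k (card \<pi>1) * \<phi> (U @ rest)"
      using recursion[OF mp n(2) p1] by (simp add: U_def)
    have mpU: "multipartition (U @ rest)"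
      using fb.Ubar_multi mp unfolding U_def multipartition_def by auto
    have MU: "Mz U = (\<Prod>\<sigma>\<in>P - {\<pi>1}. (2::nat))"
      using fb.Ubar_prod[of "\<lambda>_. (2::nat)"] by (simp add: Mz_def U_def)
    have cP: "card (P - {\<pi>1}) < card P" using fb.finP p1(1) by (meson card_Diff1_less)
    have "Mz (U @ rest) = 2 ^ card (P - {\<pi>1}) * Mz rest" using MU by (simp add: Mz_def)
    also have "\<dots> < 2 ^ card P * Mz rest"
      using cP Mz_pos[of rest] by simp
    also have "\<dots> = Mz xs" using Cons by (simp add: Mz_def)
    finally have lt: "Mz (U @ rest) < Mz xs" .
    have IH: "\<phi> (U @ rest) = prod_list (map (\<lambda>Q. \<Prod>\<beta>\<in>Q. k (card \<beta>)) (U @ rest))"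
      using less.hyps[OF lt mpU] .
    have FU: "prod_list (map (\<lambda>Q. \<Prod>\<beta>\<in>Q. k (card \<beta>)) U) = (\<Prod>\<sigma>\<in>P - {\<pi>1}. k (card \<sigma>))"
      using fb.Ubar_prod[of k] by (simp add: U_def)
    have PP: "(\<Prod>\<sigma>\<in>P. k (card \<sigma>)) = k (card \<pi>1) * (\<Prod>\<sigma>\<in>P - {\<pi>1}. k (card \<sigma>))"
      using fb.finP p1(1) by (simp add: prod.remove)
    show ?thesis using rec IH FU PP Cons by (simp add: mult.assoc)
  qed
qed

end

theorem mainTheorem13:
  fixes k :: "nat \<Rightarrow> 'a::comm_ring_1"
    and \<kappa> \<phi> :: "ncpart list \<Rightarrow> 'a"
  assumes kappa_inf: "infinitesimal_char \<kappa>"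
    and kappa_I: "\<And>n. n \<ge> 1 \<Longrightarrow> \<kappa> [I_part n] = k n"
    and kappa_other: "\<And>P. nonempty_ncp P \<Longrightarrow> (\<forall>n\<ge>1. P \<noteq> I_part n) \<Longrightarrow> \<kappa> [P] = 0"
    and phi_fix: "\<And>x. multipartition x \<Longrightarrow> \<phi> x = counit x + prec \<kappa> \<phi> x"
  shows "(\<forall>P. nonempty_ncp P \<longrightarrow> \<phi> [P] = (\<Prod>\<pi>\<in>P. k (card \<pi>)))
    \<and> (\<forall>n\<ge>1. coact \<phi> zeta [J_part n] = (\<Sum>Q\<in>NCP n. \<Prod>\<pi>\<in>Q. k (card \<pi>)))"
proof -
  interpret setting k \<kappa> \<phi>
    using kappa_inf kappa_I kappa_other phi_fix by unfold_locales auto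
  have part1: "\<phi> [P] = (\<Prod>\<pi>\<in>P. k (card \<pi>))" if "nonempty_ncp P" for P
    using phi_prod[of "[P]"] that by (simp add: multipartition_def)
  have part2: "coact \<phi> zeta [J_part n] = (\<Sum>Q\<in>NCP n. \<Prod>\<pi>\<in>Q. k (card \<pi>))" if n: "n \<ge> 1" for n
  proof -
    have UJ: "\<Union>(J_part n) = {1..n}" by (auto simp: J_part_def)
    have qc: "quot_char zeta P Q = (1::'a)" for P Q by (simp add: quot_char_def zeta_def)
    have ref: "refines (J_part n) Q" if "Q \<in> NCP n" for Q
    proof -
      have "\<Union>Q = {1..n}" using NCP_facts(1)[OF that] .
      then show ?thesis by (auto simp: refines_def J_part_def)
    qed
    have Bset: "{Qs. length Qs = length [J_part n] \<and>
        (\<forall>i<length [J_part n]. Qs ! i \<in> NCP (card (\<Union>([J_part n] ! i))) \<and> refines ([J_part n] ! i) (Qs ! i))}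
        = (\<lambda>Q. [Q]) ` NCP n"
    proof
      show "{Qs. length Qs = length [J_part n] \<and>
        (\<forall>i<length [J_part n]. Qs ! i \<in> NCP (card (\<Union>([J_part n] ! i))) \<and> refines ([J_part n] ! i) (Qs ! i))}
        \<subseteq> (\<lambda>Q. [Q]) ` NCP n"
      proof
        fix Qs assume "Qs \<in> {Qs. length Qs = length [J_part n] \<and>
          (\<forall>i<length [J_part n]. Qs ! i \<in> NCP (card (\<Union>([J_part n] ! i))) \<and> refines ([J_part n] ! i) (Qs ! i))}"
        then have h: "length Qs = 1" "Qs ! 0 \<in> NCP n" using UJ by auto
        then have "Qs = [Qs ! 0]" by (cases Qs) auto
        then show "Qs \<in> (\<lambda>Q. [Q]) ` NCP n" using h(2) by (metis imageI)
      qed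
      show "(\<lambda>Q. [Q]) ` NCP n \<subseteq> {Qs. length Qs = length [J_part n] \<and>
        (\<forall>i<length [J_part n]. Qs ! i \<in> NCP (card (\<Union>([J_part n] ! i))) \<and> refines ([J_part n] ! i) (Qs ! i))}"
        using UJ ref by auto
    qed
    have "coact \<phi> zeta [J_part n] = (\<Sum>Qs\<in>(\<lambda>Q. [Q]) ` NCP n. \<phi> Qs)"
      unfolding coact_def Bset by (simp add: qc)
    also have "\<dots> = (\<Sum>Q\<in>NCP n. \<phi> [Q])"
      by (simp add: sum.reindex inj_on_def)
    also have "\<dots> = (\<Sum>Q\<in>NCP n. \<Prod>\<pi>\<in>Q. k (card \<pi>))"
      using part1 n by (intro sum.cong) (auto simp: nonempty_ncp_def)
    finally show ?thesis .
  qed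
  show ?thesis using part1 part2 by blast
qed


end
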